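(* Let $A$ and $B$ be categories with variances, let $(R_1,L_1)$ be a span on $A$ and $(R_2,L_2)$ a span on $B$, and let $F\colon A\times B\rightarrow C$ be a functor of variance with respect to the product variance on $A\times B$. Let $L=L_1\times L_2\colon R_1\times R_2\rightarrow A\times B$. Assume that for every object $b$ of $B$ the end $\int_{L_1}F^b$ exists with universal wedge $\omega^b=(\omega^b_x\colon\int_{L_1}F^b\rightarrow F(L_1(x),b))_{x\in R_1}$, and let $\int_{L_1}F\colon B\rightarrow C$ be the unique functor of variance with $(\int_{L_1}F)(b)=\int_{L_1}F^b$ on objects and satisfying $F(id_{L_1(x)},g)\circ\omega^{g_s}_x=\omega^{g_t}_x\circ(\int_{L_1}F)(g)$ for all objects $x$ of $R_1$ and morphisms $g$ of $B$. Then the assignment $$(c,\theta)\mapsto (c,\tilde\theta),\qquad \tilde\theta_{x,y}=\omega^{L_2(y)}_x\circ\theta_y\ \ \text{for objects } (x,y) \text{ of } R_1\times R_2,$$ (acting as the identity on underlying morphisms) defines an isomorphism between the category of $L_2$-wedges of $\int_{L_1}F$ and the category of $L$-wedges of $F$. In particular, the end $\int_L F$ exists if and only if the end $\int_{L_2}\int_{L_1}F$ exists, and if one exists, they agree.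
   Context: A variance on a category $A$ is a pair $(E,M)$ of subcategories containing all objects such that every morphism $f$ factors uniquely as $f=me$ and uniquely as $f=e'm'$ with $e,e'$ in $E$ (covariant morphisms) and $m,m'$ in $M$ (contravariant morphisms). For $f\colon x\rightarrow y$ write $f=f^mf^e$ with $f^e\colon x\rightarrow f_t$ in $E$, $f^m\colon f_t\rightarrow y$ in $M$, and $f=f_ef_m$ with $f_m\colon x\rightarrow f_s$ in $M$, $f_e\colon f_s\rightarrow y$ in $E$. A functor $F\colon A\rightarrow C$ of variance $(E,M)$ assigns objects to objects and to each morphism $f$ a morphism $F(f)\colon F(f_s)\rightarrow F(f_t)$, preserving identities and satisfying, for composable $x\xrightarrow{f}y\xrightarrow{g}z$, $F(gf)=F((g^ef^m)^e)F(f)F((g_mf_e)_m)=F((g^ef^m)^m)F(g)F((g_mf_e)_e)$. The product variance on $A\times B$: a morphism $(f,g)$ is covariant (resp. contravariant) iff $f$ and $g$ both are. For $F\colon A\times B\rightarrow C$ of variance and an object $b$ of $B$, $F^b\colon A\rightarrow C$ is the functor of variance $F^b(x)=F(x,b)$, $F^b(f)=F(f,id_b)$. A span on $A$ is a pair $(R,L)$ of a category $R$ and a functor $L\colon R\rightarrow A$. For a functor of variance $G\colon A\rightarrow C$, an $L$-wedge of $G$ is a pair $(c,\eta)$ with $c$ an object of $C$ and $\eta=(\eta_x\colon c\rightarrow G(Lx))_{x\in R}$ satisfying $G(L(f)^e)\eta_x=G(L(f)^m)\eta_y$ for every morphism $f\colon x\rightarrow y$ of $R$; a morphism $(c,\eta)\rightarrow(d,\theta)$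 of $L$-wedges is a morphism $h\colon c\rightarrow d$ of $C$ with $\theta_x h=\eta_x$ for all $x$. The end $\int_L G$ is a terminal $L$-wedge, whose family is called the universal wedge. *)

theory Defs
  imports "HOL-Library.FuncSet"
begin

record ('o,'a) cat =
  Obj :: "'o set"
  Arr :: "'a set"
  Dom :: "'a \<Rightarrow> 'o"
  Cod :: "'a \<Rightarrow> 'o"
  Id  :: "'o \<Rightarrow> 'a"
  Comp :: "'a \<Rightarrow> 'a \<Rightarrow> 'a"   (* Comp C g f = g o f *)

definition hom :: "('o,'a,'z) cat_scheme \<Rightarrow> 'o \<Rightarrow> 'o \<Rightarrow> 'a set" where
  "hom C x y = {f \<in> Arr C. Dom C f = x \<and> Cod C f = y}"

definition is_cat :: "('o,'a,'z) cat_scheme \<Rightarrow> bool" where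
  "is_cat C \<longleftrightarrow>
     (\<forall>f\<in>Arr C. Dom C f \<in> Obj C \<and> Cod C f \<in> Obj C) \<and>
     (\<forall>x\<in>Obj C. Id C x \<in> hom C x x) \<and>
     (\<forall>f\<in>Arr C. \<forall>g\<in>Arr C. Cod C f = Dom C g \<longrightarrow> Comp C g f \<in> hom C (Dom C f) (Cod C g)) \<and>
     (\<forall>f\<in>Arr C. Comp C (Id C (Cod C f)) f = f \<and> Comp C f (Id C (Dom C f)) = f) \<and>
     (\<forall>f\<in>Arr C. \<forall>g\<in>Arr C. \<forall>h\<in>Arr C. Cod C f = Dom C g \<longrightarrow> Cod C g = Dom C h \<longrightarrow>
        Comp C h (Comp C g f) = Comp C (Comp C h g) f)"

definition is_functor :: "('o1,'a1,'z1) cat_scheme \<Rightarrow> ('o2,'a2,'z2) cat_scheme \<Rightarrow>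
    ('o1 \<Rightarrow> 'o2) \<Rightarrow> ('a1 \<Rightarrow> 'a2) \<Rightarrow> bool" where
  "is_functor A B Fo Fa \<longleftrightarrow>
     (\<forall>x\<in>Obj A. Fo x \<in> Obj B) \<and>
     (\<forall>f\<in>Arr A. Fa f \<in> hom B (Fo (Dom A f)) (Fo (Cod A f))) \<and>
     (\<forall>x\<in>Obj A. Fa (Id A x) = Id B (Fo x)) \<and>
     (\<forall>f\<in>Arr A. \<forall>g\<in>Arr A. Cod A f = Dom A g \<longrightarrow> Fa (Comp A g f) = Comp B (Fa g) (Fa f))"

definition is_cat_iso :: "('o1,'a1,'z1) cat_scheme \<Rightarrow> ('o2,'a2,'z2) cat_scheme \<Rightarrow>
    ('o1 \<Rightarrow> 'o2) \<Rightarrow> ('a1 \<Rightarrow> 'a2) \<Rightarrow> bool" where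
  "is_cat_iso A B Fo Fa \<longleftrightarrow> is_functor A B Fo Fa \<and>
     bij_betw Fo (Obj A) (Obj B) \<and> bij_betw Fa (Arr A) (Arr B)"

definition prod_cat :: "('o1,'a1,'z1) cat_scheme \<Rightarrow> ('o2,'a2,'z2) cat_scheme \<Rightarrow>
    ('o1 \<times> 'o2, 'a1 \<times> 'a2) cat" where
  "prod_cat A B = \<lparr> Obj = Obj A \<times> Obj B, Arr = Arr A \<times> Arr B,
     Dom = (\<lambda>(f,g). (Dom A f, Dom B g)), Cod = (\<lambda>(f,g). (Cod A f, Cod B g)),
     Id = (\<lambda>(x,y). (Id A x, Id B y)),
     Comp = (\<lambda>(f',g') (f,g). (Comp A f' f, Comp B g' g)) \<rparr>"

text \<open>A category with a distinguished pair (Cov, Con) = (E, M).\<close>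
record ('o,'a) vcat = "('o,'a) cat" +
  Cov :: "'a set"
  Con :: "'a set"

definition is_subcat_all_obj :: "('o,'a,'z) cat_scheme \<Rightarrow> 'a set \<Rightarrow> bool" where
  "is_subcat_all_obj C S \<longleftrightarrow> S \<subseteq> Arr C \<and> (\<forall>x\<in>Obj C. Id C x \<in> S) \<and>
     (\<forall>f\<in>S. \<forall>g\<in>S. Cod C f = Dom C g \<longrightarrow> Comp C g f \<in> S)"

definition is_variance :: "('o,'a,'z) vcat_scheme \<Rightarrow> bool" where
  "is_variance C \<longleftrightarrow> is_cat C \<and> is_subcat_all_obj C (Cov C) \<and> is_subcat_all_obj C (Con C) \<and>
     (\<forall>f\<in>Arr C. \<exists>!p. fst p \<in> Con C \<and> snd p \<in> Cov C \<and> Cod C (snd p) = Dom C (fst p)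
                      \<and> Comp C (fst p) (snd p) = f) \<and>
     (\<forall>f\<in>Arr C. \<exists>!p. fst p \<in> Cov C \<and> snd p \<in> Con C \<and> Cod C (snd p) = Dom C (fst p)
                      \<and> Comp C (fst p) (snd p) = f)"

definition vfac1 :: "('o,'a,'z) vcat_scheme \<Rightarrow> 'a \<Rightarrow> 'a \<times> 'a" where
  "vfac1 C f = (THE p. fst p \<in> Con C \<and> snd p \<in> Cov C \<and> Cod C (snd p) = Dom C (fst p)
                      \<and> Comp C (fst p) (snd p) = f)"
definition vfac2 :: "('o,'a,'z) vcat_scheme \<Rightarrow> 'a \<Rightarrow> 'a \<times> 'a" where
  "vfac2 C f = (THE p. fst p \<in> Cov C \<and> snd p \<in> Con C \<and> Cod C (snd p) = Dom C (fst p)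
                      \<and> Comp C (fst p) (snd p) = f)"

definition upE :: "('o,'a,'z) vcat_scheme \<Rightarrow> 'a \<Rightarrow> 'a" where "upE C f = snd (vfac1 C f)"
definition upM :: "('o,'a,'z) vcat_scheme \<Rightarrow> 'a \<Rightarrow> 'a" where "upM C f = fst (vfac1 C f)"
definition loE :: "('o,'a,'z) vcat_scheme \<Rightarrow> 'a \<Rightarrow> 'a" where "loE C f = fst (vfac2 C f)"
definition loM :: "('o,'a,'z) vcat_scheme \<Rightarrow> 'a \<Rightarrow> 'a" where "loM C f = snd (vfac2 C f)"
definition vtgt :: "('o,'a,'z) vcat_scheme \<Rightarrow> 'a \<Rightarrow> 'o" where "vtgt C f = Cod C (upE C f)"
definition vsrc :: "('o,'a,'z) vcat_scheme \<Rightarrow> 'a \<Rightarrow> 'o" where "vsrc C f = Cod C (loM C f)"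

definition prod_vcat :: "('o1,'a1,'z1) vcat_scheme \<Rightarrow> ('o2,'a2,'z2) vcat_scheme \<Rightarrow>
    ('o1 \<times> 'o2, 'a1 \<times> 'a2) vcat" where
  "prod_vcat A B = \<lparr> Obj = Obj A \<times> Obj B, Arr = Arr A \<times> Arr B,
     Dom = (\<lambda>(f,g). (Dom A f, Dom B g)), Cod = (\<lambda>(f,g). (Cod A f, Cod B g)),
     Id = (\<lambda>(x,y). (Id A x, Id B y)),
     Comp = (\<lambda>(f',g') (f,g). (Comp A f' f, Comp B g' g)),
     Cov = Cov A \<times> Cov B, Con = Con A \<times> Con B \<rparr>"

definition is_vfunctor :: "('o1,'a1,'z1) vcat_scheme \<Rightarrow> ('o2,'a2,'z2) cat_scheme \<Rightarrow>
    ('o1 \<Rightarrow> 'o2) \<Rightarrow> ('a1 \<Rightarrow> 'a2) \<Rightarrow> bool" where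
  "is_vfunctor A C Fo Fa \<longleftrightarrow>
     (\<forall>x\<in>Obj A. Fo x \<in> Obj C) \<and>
     (\<forall>f\<in>Arr A. Fa f \<in> hom C (Fo (vsrc A f)) (Fo (vtgt A f))) \<and>
     (\<forall>x\<in>Obj A. Fa (Id A x) = Id C (Fo x)) \<and>
     (\<forall>f\<in>Arr A. \<forall>g\<in>Arr A. Cod A f = Dom A g \<longrightarrow>
        Fa (Comp A g f) =
          Comp C (Fa (upE A (Comp A (upE A g) (upM A f))))
            (Comp C (Fa f) (Fa (loM A (Comp A (loM A g) (loE A f))))) \<and>
        Fa (Comp A g f) =
          Comp C (Fa (upM A (Comp A (upE A g) (upM A f))))
            (Comp C (Fa g) (Fa (loE A (Comp A (loM A g) (loE A f))))))"

definition is_wedge :: "('o,'a,'z) vcat_scheme \<Rightarrow> ('oc,'ac,'zc) cat_scheme \<Rightarrow>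
    ('o \<Rightarrow> 'oc) \<Rightarrow> ('a \<Rightarrow> 'ac) \<Rightarrow> ('r,'b,'zr) cat_scheme \<Rightarrow> ('r \<Rightarrow> 'o) \<Rightarrow> ('b \<Rightarrow> 'a) \<Rightarrow>
    'oc \<Rightarrow> ('r \<Rightarrow> 'ac) \<Rightarrow> bool" where
  "is_wedge A C Go Ga R Lo La c \<eta> \<longleftrightarrow> c \<in> Obj C \<and>
     (\<forall>x\<in>Obj R. \<eta> x \<in> hom C c (Go (Lo x))) \<and>
     (\<forall>f\<in>Arr R. Comp C (Ga (upE A (La f))) (\<eta> (Dom R f)) = Comp C (Ga (upM A (La f))) (\<eta> (Cod R f)))"

definition wedge_morph :: "('oc,'ac,'zc) cat_scheme \<Rightarrow> ('r,'b,'zr) cat_scheme \<Rightarrow>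
    'oc \<Rightarrow> ('r \<Rightarrow> 'ac) \<Rightarrow> 'oc \<Rightarrow> ('r \<Rightarrow> 'ac) \<Rightarrow> 'ac \<Rightarrow> bool" where
  "wedge_morph C R c \<eta> d \<theta> h \<longleftrightarrow> h \<in> hom C c d \<and> (\<forall>x\<in>Obj R. Comp C (\<theta> x) h = \<eta> x)"

text \<open>The category of L-wedges; a wedge family is taken extensional on the objects of R.\<close>
definition wedge_cat :: "('o,'a,'z) vcat_scheme \<Rightarrow> ('oc,'ac,'zc) cat_scheme \<Rightarrow>
    ('o \<Rightarrow> 'oc) \<Rightarrow> ('a \<Rightarrow> 'ac) \<Rightarrow> ('r,'b,'zr) cat_scheme \<Rightarrow> ('r \<Rightarrow> 'o) \<Rightarrow> ('b \<Rightarrow> 'a) \<Rightarrow>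
    ('oc \<times> ('r \<Rightarrow> 'ac), ('oc \<times> ('r \<Rightarrow> 'ac)) \<times> ('oc \<times> ('r \<Rightarrow> 'ac)) \<times> 'ac) cat" where
  "wedge_cat A C Go Ga R Lo La =
    (let W = {(c,\<eta>). is_wedge A C Go Ga R Lo La c \<eta> \<and> \<eta> \<in> extensional (Obj R)} in
     \<lparr> Obj = W,
       Arr = {(v,w,h). v \<in> W \<and> w \<in> W \<and> wedge_morph C R (fst v) (snd v) (fst w) (snd w) h},
       Dom = (\<lambda>(v,w,h). v), Cod = (\<lambda>(v,w,h). w),
       Id = (\<lambda>v. (v, v, Id C (fst v))),
       Comp = (\<lambda>(v',w',k) (v,w,h). (v, w', Comp C k h)) \<rparr>)"

definition is_end :: "('o,'a,'z) vcat_scheme \<Rightarrow> ('oc,'ac,'zc) cat_scheme \<Rightarrow>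
    ('o \<Rightarrow> 'oc) \<Rightarrow> ('a \<Rightarrow> 'ac) \<Rightarrow> ('r,'b,'zr) cat_scheme \<Rightarrow> ('r \<Rightarrow> 'o) \<Rightarrow> ('b \<Rightarrow> 'a) \<Rightarrow>
    'oc \<Rightarrow> ('r \<Rightarrow> 'ac) \<Rightarrow> bool" where
  "is_end A C Go Ga R Lo La c \<eta> \<longleftrightarrow> is_wedge A C Go Ga R Lo La c \<eta> \<and>
     (\<forall>d \<theta>. is_wedge A C Go Ga R Lo La d \<theta> \<longrightarrow> (\<exists>!h. wedge_morph C R d \<theta> c \<eta> h))"

definition has_end :: "('o,'a,'z) vcat_scheme \<Rightarrow> ('oc,'ac,'zc) cat_scheme \<Rightarrow>
    ('o \<Rightarrow> 'oc) \<Rightarrow> ('a \<Rightarrow> 'ac) \<Rightarrow> ('r,'b,'zr) cat_scheme \<Rightarrow> ('r \<Rightarrow> 'o) \<Rightarrow> ('b \<Rightarrow> 'a) \<Rightarrow> bool" where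
  "has_end A C Go Ga R Lo La \<longleftrightarrow> (\<exists>c \<eta>. is_end A C Go Ga R Lo La c \<eta>)"

definition tilde_fam :: "('oc,'ac,'zc) cat_scheme \<Rightarrow> ('r1,'b1,'z1) cat_scheme \<Rightarrow> ('r2,'b2,'z2) cat_scheme \<Rightarrow>
    ('r2 \<Rightarrow> 'ob) \<Rightarrow> ('ob \<Rightarrow> 'r1 \<Rightarrow> 'ac) \<Rightarrow> ('r2 \<Rightarrow> 'ac) \<Rightarrow> ('r1 \<times> 'r2 \<Rightarrow> 'ac)" where
  "tilde_fam C R1 R2 L2o \<omega> \<theta> =
     restrict (\<lambda>(x,y). Comp C (\<omega> (L2o y) x) (\<theta> y)) (Obj R1 \<times> Obj R2)"

definition tilde_obj where
  "tilde_obj C R1 R2 L2o \<omega> w = (fst w, tilde_fam C R1 R2 L2o \<omega> (snd w))"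

definition tilde_arr where
  "tilde_arr C R1 R2 L2o \<omega> a =
     (case a of (v,w,h) \<Rightarrow> (tilde_obj C R1 R2 L2o \<omega> v, tilde_obj C R1 R2 L2o \<omega> w, h))"

end

theory Submission
  imports Defs
begin

lemma hom_iff: "h \<in> hom C a b \<longleftrightarrow> h \<in> Arr C \<and> Dom C h = a \<and> Cod C h = b"
  by (simp add: hom_def)

lemma cat_dom: "is_cat C \<Longrightarrow> f \<in> Arr C \<Longrightarrow> Dom C f \<in> Obj C"
  and cat_cod: "is_cat C \<Longrightarrow> f \<in> Arr C \<Longrightarrow> Cod C f \<in> Obj C"
  by (auto simp: is_cat_def)

lemma cat_id: "is_cat C \<Longrightarrow> x \<in> Obj C \<Longrightarrow> Id C x \<in> Arr C \<and> Dom C (Id C x) = x \<and> Cod C (Id C x) = x"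
  by (auto simp: is_cat_def hom_def)

lemma cat_comp: "is_cat C \<Longrightarrow> f \<in> Arr C \<Longrightarrow> g \<in> Arr C \<Longrightarrow> Cod C f = Dom C g \<Longrightarrow>
   Comp C g f \<in> Arr C \<and> Dom C (Comp C g f) = Dom C f \<and> Cod C (Comp C g f) = Cod C g"
  by (auto simp: is_cat_def hom_def)

lemma cat_idl: "is_cat C \<Longrightarrow> f \<in> Arr C \<Longrightarrow> Comp C (Id C (Cod C f)) f = f"
  and cat_idr: "is_cat C \<Longrightarrow> f \<in> Arr C \<Longrightarrow> Comp C f (Id C (Dom C f)) = f"
  by (auto simp: is_cat_def)

lemma cat_assoc: "is_cat C \<Longrightarrow> f \<in> Arr C \<Longrightarrow> g \<in> Arr C \<Longrightarrow> h \<in> Arr C \<Longrightarrow>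
  Cod C f = Dom C g \<Longrightarrow> Cod C g = Dom C h \<Longrightarrow> Comp C h (Comp C g f) = Comp C (Comp C h g) f"
  by (auto simp: is_cat_def)

lemma var_cat: "is_variance D \<Longrightarrow> is_cat D" by (simp add: is_variance_def)

lemma var_cov: "is_variance D \<Longrightarrow> e \<in> Cov D \<Longrightarrow> e \<in> Arr D"
  and var_con: "is_variance D \<Longrightarrow> e \<in> Con D \<Longrightarrow> e \<in> Arr D"
  and var_id_cov: "is_variance D \<Longrightarrow> x \<in> Obj D \<Longrightarrow> Id D x \<in> Cov D"
  and var_id_con: "is_variance D \<Longrightarrow> x \<in> Obj D \<Longrightarrow> Id D x \<in> Con D"
  by (auto simp: is_variance_def is_subcat_all_obj_def)

lemma vfac1_eq:
  assumes "is_variance D" "f \<in> Arr D"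
    "fst p \<in> Con D" "snd p \<in> Cov D" "Cod D (snd p) = Dom D (fst p)" "Comp D (fst p) (snd p) = f"
  shows "vfac1 D f = p"
proof -
  have "\<exists>!p. fst p \<in> Con D \<and> snd p \<in> Cov D \<and> Cod D (snd p) = Dom D (fst p) \<and> Comp D (fst p) (snd p) = f"
    using assms(1,2) by (simp add: is_variance_def)
  then show ?thesis unfolding vfac1_def using assms by (intro the1_equality) auto
qed

lemma vfac2_eq:
  assumes "is_variance D" "f \<in> Arr D"
    "fst p \<in> Cov D" "snd p \<in> Con D" "Cod D (snd p) = Dom D (fst p)" "Comp D (fst p) (snd p) = f"
  shows "vfac2 D f = p"
proof -
  have "\<exists>!p. fst p \<in> Cov D \<and> snd p \<in> Con D \<and> Cod D (snd p) = Dom D (fst p) \<and> Comp D (fst p) (snd p) = f"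
    using assms(1,2) by (simp add: is_variance_def)
  then show ?thesis unfolding vfac2_def using assms by (intro the1_equality) auto
qed

lemma vfac1_prop:
  assumes "is_variance D" "f \<in> Arr D"
  shows "upM D f \<in> Con D \<and> upE D f \<in> Cov D \<and> Cod D (upE D f) = Dom D (upM D f) \<and> Comp D (upM D f) (upE D f) = f"
proof -
  have "\<exists>!p. fst p \<in> Con D \<and> snd p \<in> Cov D \<and> Cod D (snd p) = Dom D (fst p) \<and> Comp D (fst p) (snd p) = f"
    using assms(1,2) by (simp add: is_variance_def)
  from theI'[OF this] show ?thesis unfolding upM_def upE_def vfac1_def by simp
qed

lemma vfac2_prop:
  assumes "is_variance D" "f \<in> Arr D"
  shows "loE D f \<in> Cov D \<and> loM D f \<in> Con D \<and> Cod D (loM D f) = Dom D (loE D f) \<and> Comp D (loE D f) (loM D f) = f"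
proof -
  have "\<exists>!p. fst p \<in> Cov D \<and> snd p \<in> Con D \<and> Cod D (snd p) = Dom D (fst p) \<and> Comp D (fst p) (snd p) = f"
    using assms(1,2) by (simp add: is_variance_def)
  from theI'[OF this] show ?thesis unfolding loM_def loE_def vfac2_def by simp
qed

lemma upE_dom: assumes "is_variance D" "f \<in> Arr D"
  shows "upE D f \<in> Arr D" "upM D f \<in> Arr D" "Dom D (upE D f) = Dom D f" "Cod D (upM D f) = Cod D f"
proof -
  have c: "is_cat D" using var_cat[OF assms(1)] .
  note p = vfac1_prop[OF assms]
  have a1: "upE D f \<in> Arr D" "upM D f \<in> Arr D" using var_cov[OF assms(1)] var_con[OF assms(1)] p by simp_all
  then show "upE D f \<in> Arr D" "upM D f \<in> Arr D" by auto
  have "Dom D (Comp D (upM D f) (upE D f)) = Dom D (upE D f)" "Cod D (Comp D (upM D f) (upE D f)) = Cod D (upM D f)"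
    using cat_comp[OF c a1] p by auto
  then show "Dom D (upE D f) = Dom D f" "Cod D (upM D f) = Cod D f" using p by auto
qed

lemma loE_dom: assumes "is_variance D" "f \<in> Arr D"
  shows "loE D f \<in> Arr D" "loM D f \<in> Arr D" "Dom D (loM D f) = Dom D f" "Cod D (loE D f) = Cod D f"
proof -
  have c: "is_cat D" using var_cat[OF assms(1)] .
  note p = vfac2_prop[OF assms]
  have a1: "loM D f \<in> Arr D" "loE D f \<in> Arr D" using var_cov[OF assms(1)] var_con[OF assms(1)] p by simp_all
  then show "loE D f \<in> Arr D" "loM D f \<in> Arr D" by auto
  have "Dom D (Comp D (loE D f) (loM D f)) = Dom D (loM D f)" "Cod D (Comp D (loE D f) (loM D f)) = Cod D (loE D f)"
    using cat_comp[OF c a1(1) a1(2)] p by auto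
  then show "Dom D (loM D f) = Dom D f" "Cod D (loE D f) = Cod D f" using p by auto
qed

lemma cov_fac:
  assumes "is_variance D" "e \<in> Cov D"
  shows "upE D e = e" "upM D e = Id D (Cod D e)" "loE D e = e" "loM D e = Id D (Dom D e)"
    "vsrc D e = Dom D e" "vtgt D e = Cod D e"
proof -
  have c: "is_cat D" using var_cat[OF assms(1)] .
  have a: "e \<in> Arr D" using var_cov[OF assms] .
  have o: "Cod D e \<in> Obj D" "Dom D e \<in> Obj D" using cat_dom[OF c a] cat_cod[OF c a] by simp_all
  have "vfac1 D e = (Id D (Cod D e), e)"
    using vfac1_eq[OF assms(1) a] var_id_con[OF assms(1) o(1)] assms cat_id[OF c o(1)] cat_idl[OF c a] by auto
  then show 1: "upE D e = e" "upM D e = Id D (Cod D e)" by (auto simp: upE_def upM_def)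
  have "vfac2 D e = (e, Id D (Dom D e))"
    using vfac2_eq[OF assms(1) a] var_id_con[OF assms(1) o(2)] assms cat_id[OF c o(2)] cat_idr[OF c a] by auto
  then show 2: "loE D e = e" "loM D e = Id D (Dom D e)" by (auto simp: loE_def loM_def)
  show "vsrc D e = Dom D e" "vtgt D e = Cod D e" using 1 2 cat_id[OF c o(2)] by (auto simp: vsrc_def vtgt_def)
qed

lemma con_fac:
  assumes "is_variance D" "e \<in> Con D"
  shows "upE D e = Id D (Dom D e)" "upM D e = e" "loE D e = Id D (Cod D e)" "loM D e = e"
    "vsrc D e = Cod D e" "vtgt D e = Dom D e"
proof -
  have c: "is_cat D" using var_cat[OF assms(1)] .
  have a: "e \<in> Arr D" using var_con[OF assms] .
  have o: "Cod D e \<in> Obj D" "Dom D e \<in> Obj D" using cat_dom[OF c a] cat_cod[OF c a] by simp_all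
  have "vfac1 D e = (e, Id D (Dom D e))"
    using vfac1_eq[OF assms(1) a] var_id_cov[OF assms(1) o(2)] assms cat_id[OF c o(2)] cat_idr[OF c a] by auto
  then show 1: "upE D e = Id D (Dom D e)" "upM D e = e" by (auto simp: upE_def upM_def)
  have "vfac2 D e = (Id D (Cod D e), e)"
    using vfac2_eq[OF assms(1) a] var_id_cov[OF assms(1) o(1)] assms cat_id[OF c o(1)] cat_idl[OF c a] by auto
  then show 2: "loE D e = Id D (Cod D e)" "loM D e = e" by (auto simp: loE_def loM_def)
  show "vsrc D e = Cod D e" "vtgt D e = Dom D e" using 1 2 cat_id[OF c o(2)] by (auto simp: vsrc_def vtgt_def)
qed

lemma vfun_ty: assumes "is_vfunctor D C Fo Fa" "f \<in> Arr D" shows "Fa f \<in> hom C (Fo (vsrc D f)) (Fo (vtgt D f))"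
proof -
  have "\<forall>f\<in>Arr D. Fa f \<in> hom C (Fo (vsrc D f)) (Fo (vtgt D f))"
    using assms(1) unfolding is_vfunctor_def by (elim conjE) assumption
  then show ?thesis using assms(2) by blast
qed

lemma vfun_id: assumes "is_vfunctor D C Fo Fa" "x \<in> Obj D" shows "Fa (Id D x) = Id C (Fo x)"
proof -
  have "\<forall>x\<in>Obj D. Fa (Id D x) = Id C (Fo x)"
    using assms(1) unfolding is_vfunctor_def by (elim conjE) assumption
  then show ?thesis using assms(2) by blast
qed

lemma vfun_ty_cov: "is_variance D \<Longrightarrow> is_vfunctor D C Fo Fa \<Longrightarrow> f \<in> Cov D \<Longrightarrow> Fa f \<in> hom C (Fo (Dom D f)) (Fo (Cod D f))"
  using vfun_ty[of D C Fo Fa f] cov_fac[of D f] var_cov[of D f] by simp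

lemma vfun_ty_con: "is_variance D \<Longrightarrow> is_vfunctor D C Fo Fa \<Longrightarrow> f \<in> Con D \<Longrightarrow> Fa f \<in> hom C (Fo (Cod D f)) (Fo (Dom D f))"
  using vfun_ty[of D C Fo Fa f] con_fac[of D f] var_con[of D f] by simp

lemma vfun_eqs: assumes "is_vfunctor D C Fo Fa" "f \<in> Arr D" "g \<in> Arr D" "Cod D f = Dom D g"
  shows "Fa (Comp D g f) =
          Comp C (Fa (upE D (Comp D (upE D g) (upM D f))))
            (Comp C (Fa f) (Fa (loM D (Comp D (loM D g) (loE D f)))))"
   "Fa (Comp D g f) =
          Comp C (Fa (upM D (Comp D (upE D g) (upM D f))))
            (Comp C (Fa g) (Fa (loE D (Comp D (loM D g) (loE D f)))))"
proof -
  have "\<forall>f\<in>Arr D. \<forall>g\<in>Arr D. Cod D f = Dom D g \<longrightarrow>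
        Fa (Comp D g f) =
          Comp C (Fa (upE D (Comp D (upE D g) (upM D f))))
            (Comp C (Fa f) (Fa (loM D (Comp D (loM D g) (loE D f))))) \<and>
        Fa (Comp D g f) =
          Comp C (Fa (upM D (Comp D (upE D g) (upM D f))))
            (Comp C (Fa g) (Fa (loE D (Comp D (loM D g) (loE D f)))))"
    using assms(1) unfolding is_vfunctor_def by (elim conjE) assumption
  then have "Fa (Comp D g f) =
          Comp C (Fa (upE D (Comp D (upE D g) (upM D f))))
            (Comp C (Fa f) (Fa (loM D (Comp D (loM D g) (loE D f))))) \<and>
        Fa (Comp D g f) =
          Comp C (Fa (upM D (Comp D (upE D g) (upM D f))))
            (Comp C (Fa g) (Fa (loE D (Comp D (loM D g) (loE D f)))))"
    using assms(2-4) by blast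
  then show "Fa (Comp D g f) =
          Comp C (Fa (upE D (Comp D (upE D g) (upM D f))))
            (Comp C (Fa f) (Fa (loM D (Comp D (loM D g) (loE D f)))))"
   "Fa (Comp D g f) =
          Comp C (Fa (upM D (Comp D (upE D g) (upM D f))))
            (Comp C (Fa g) (Fa (loE D (Comp D (loM D g) (loE D f)))))" by (rule conjunct1, rule conjunct2)
qed

lemma vfun_comp_cov:
  assumes V: "is_variance D" and C: "is_cat C" and F: "is_vfunctor D C Fo Fa"
    and f: "f \<in> Cov D" and g: "g \<in> Cov D" and fg: "Cod D f = Dom D g"
  shows "Fa (Comp D g f) = Comp C (Fa g) (Fa f)"
proof -
  have c: "is_cat D" using var_cat[OF V] .
  have fa: "f \<in> Arr D" and ga: "g \<in> Arr D" using var_cov[OF V f] var_cov[OF V g] by simp_all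
  have od: "Dom D f \<in> Obj D" using cat_dom[OF c fa] .
  have eq: "Fa (Comp D g f) = Comp C (Fa (upE D (Comp D (upE D g) (upM D f))))
            (Comp C (Fa f) (Fa (loM D (Comp D (loM D g) (loE D f)))))"
    by (rule vfun_eqs(1)[OF F fa ga fg])
  have 1: "Comp D (upE D g) (upM D f) = g" using cov_fac[OF V f] cov_fac[OF V g] fg cat_idr[OF c ga] by simp
  have 2: "Comp D (loM D g) (loE D f) = f" using cov_fac[OF V f] cov_fac[OF V g] fg cat_idl[OF c fa] by simp
  have 3: "Fa (Id D (Dom D f)) = Id C (Fo (Dom D f))" using vfun_id[OF F od] .
  have 4: "Fa f \<in> hom C (Fo (Dom D f)) (Fo (Cod D f))" using vfun_ty[OF F fa] cov_fac[OF V f] by simp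
  have 5: "Comp C (Fa f) (Id C (Fo (Dom D f))) = Fa f" using cat_idr[OF C, of "Fa f"] 4 by (simp add: hom_def)
  show ?thesis using eq 1 2 3 5 cov_fac[OF V f] cov_fac[OF V g] by simp
qed

lemma vfun_comp_con:
  assumes V: "is_variance D" and C: "is_cat C" and F: "is_vfunctor D C Fo Fa"
    and f: "f \<in> Con D" and g: "g \<in> Con D" and fg: "Cod D f = Dom D g"
  shows "Fa (Comp D g f) = Comp C (Fa f) (Fa g)"
proof -
  have c: "is_cat D" using var_cat[OF V] .
  have fa: "f \<in> Arr D" and ga: "g \<in> Arr D" using var_con[OF V f] var_con[OF V g] by simp_all
  have od: "Cod D g \<in> Obj D" using cat_cod[OF c ga] .
  have eq: "Fa (Comp D g f) = Comp C (Fa (upM D (Comp D (upE D g) (upM D f))))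
            (Comp C (Fa g) (Fa (loE D (Comp D (loM D g) (loE D f)))))"
    by (rule vfun_eqs(2)[OF F fa ga fg])
  have 1: "Comp D (upE D g) (upM D f) = f" using con_fac[OF V f] con_fac[OF V g] fg cat_idl[OF c fa] by simp
  have 2: "Comp D (loM D g) (loE D f) = g" using con_fac[OF V f] con_fac[OF V g] fg cat_idr[OF c ga] by simp
  have 3: "Fa (Id D (Cod D g)) = Id C (Fo (Cod D g))" using vfun_id[OF F od] .
  have 4: "Fa g \<in> hom C (Fo (Cod D g)) (Fo (Dom D g))" using vfun_ty[OF F ga] con_fac[OF V g] by simp
  have 5: "Comp C (Fa g) (Id C (Fo (Cod D g))) = Fa g" using cat_idr[OF C, of "Fa g"] 4 by (simp add: hom_def)
  show ?thesis using eq 1 2 3 5 con_fac[OF V f] con_fac[OF V g] by simp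
qed

lemma prod_simps[simp]:
  "Obj (prod_vcat A B) = Obj A \<times> Obj B" "Arr (prod_vcat A B) = Arr A \<times> Arr B"
  "Dom (prod_vcat A B) (f,g) = (Dom A f, Dom B g)" "Cod (prod_vcat A B) (f,g) = (Cod A f, Cod B g)"
  "Id (prod_vcat A B) (x,y) = (Id A x, Id B y)"
  "Comp (prod_vcat A B) (f',g') (f,g) = (Comp A f' f, Comp B g' g)"
  "Cov (prod_vcat A B) = Cov A \<times> Cov B" "Con (prod_vcat A B) = Con A \<times> Con B"
  by (simp_all add: prod_vcat_def)

lemma prodc_simps[simp]:
  "Obj (prod_cat A B) = Obj A \<times> Obj B" "Arr (prod_cat A B) = Arr A \<times> Arr B"
  "Dom (prod_cat A B) (f,g) = (Dom A f, Dom B g)" "Cod (prod_cat A B) (f,g) = (Cod A f, Cod B g)"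
  "Id (prod_cat A B) (x,y) = (Id A x, Id B y)"
  "Comp (prod_cat A B) (f',g') (f,g) = (Comp A f' f, Comp B g' g)"
  by (simp_all add: prod_cat_def)

lemma prod_is_cat:
  assumes cA: "is_cat A" and cB: "is_cat B"
  shows "is_cat (prod_vcat A B)"
  unfolding is_cat_def
proof (intro conjI ballI impI)
  fix f assume "f \<in> Arr (prod_vcat A B)"
  then show "Dom (prod_vcat A B) f \<in> Obj (prod_vcat A B)"
    using cA cB by (cases f) (auto simp: cat_dom cat_cod)
next
  fix f assume "f \<in> Arr (prod_vcat A B)"
  then show "Cod (prod_vcat A B) f \<in> Obj (prod_vcat A B)"
    using cA cB by (cases f) (auto simp: cat_dom cat_cod)
next
  fix x assume "x \<in> Obj (prod_vcat A B)"
  then show "Id (prod_vcat A B) x \<in> hom (prod_vcat A B) x x"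
    using cA cB by (cases x) (auto simp: hom_def cat_id)
next
  fix f g assume "f \<in> Arr (prod_vcat A B)" "g \<in> Arr (prod_vcat A B)" "Cod (prod_vcat A B) f = Dom (prod_vcat A B) g"
  then show "Comp (prod_vcat A B) g f \<in> hom (prod_vcat A B) (Dom (prod_vcat A B) f) (Cod (prod_vcat A B) g)"
    using cA cB by (cases f; cases g) (auto simp: hom_def cat_comp)
next
  fix f assume "f \<in> Arr (prod_vcat A B)"
  then show "Comp (prod_vcat A B) (Id (prod_vcat A B) (Cod (prod_vcat A B) f)) f = f"
    using cA cB by (cases f) (auto simp: cat_idl cat_idr)
next
  fix f assume "f \<in> Arr (prod_vcat A B)"
  then show "Comp (prod_vcat A B) f (Id (prod_vcat A B) (Dom (prod_vcat A B) f)) = f"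
    using cA cB by (cases f) (auto simp: cat_idl cat_idr)
next
  fix f g h assume "f \<in> Arr (prod_vcat A B)" "g \<in> Arr (prod_vcat A B)" "h \<in> Arr (prod_vcat A B)"
    "Cod (prod_vcat A B) f = Dom (prod_vcat A B) g" "Cod (prod_vcat A B) g = Dom (prod_vcat A B) h"
  then show "Comp (prod_vcat A B) h (Comp (prod_vcat A B) g f) = Comp (prod_vcat A B) (Comp (prod_vcat A B) h g) f"
    using cA cB by (cases f; cases g; cases h) (auto simp: cat_assoc)
qed

lemma prod_variance:
  assumes A: "is_variance A" and B: "is_variance B"
  shows "is_variance (prod_vcat A B)"
proof -
  have cA: "is_cat A" and cB: "is_cat B" using var_cat[OF A] var_cat[OF B] by simp_all
  have s1: "is_subcat_all_obj (prod_vcat A B) (Cov (prod_vcat A B))"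
    using A B unfolding is_subcat_all_obj_def is_variance_def by auto
  have s2: "is_subcat_all_obj (prod_vcat A B) (Con (prod_vcat A B))"
    using A B unfolding is_subcat_all_obj_def is_variance_def by auto
  have e1: "\<exists>!p. fst p \<in> Con (prod_vcat A B) \<and> snd p \<in> Cov (prod_vcat A B) \<and>
        Cod (prod_vcat A B) (snd p) = Dom (prod_vcat A B) (fst p) \<and> Comp (prod_vcat A B) (fst p) (snd p) = h"
    if h: "h \<in> Arr (prod_vcat A B)" for h
  proof -
    obtain f g where hfg: "h = (f,g)" "f \<in> Arr A" "g \<in> Arr B" using h by auto
    show ?thesis
    proof (rule ex1I[of _ "((upM A f, upM B g),(upE A f, upE B g))"])
      show "fst ((upM A f, upM B g),(upE A f, upE B g)) \<in> Con (prod_vcat A B) \<and>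
    snd ((upM A f, upM B g),(upE A f, upE B g)) \<in> Cov (prod_vcat A B) \<and>
    Cod (prod_vcat A B) (snd ((upM A f, upM B g),(upE A f, upE B g))) = Dom (prod_vcat A B) (fst ((upM A f, upM B g),(upE A f, upE B g))) \<and>
    Comp (prod_vcat A B) (fst ((upM A f, upM B g),(upE A f, upE B g))) (snd ((upM A f, upM B g),(upE A f, upE B g))) = h"
        using vfac1_prop[OF A hfg(2)] vfac1_prop[OF B hfg(3)] hfg by simp
    next
      fix p assume p: "fst p \<in> Con (prod_vcat A B) \<and> snd p \<in> Cov (prod_vcat A B) \<and>
        Cod (prod_vcat A B) (snd p) = Dom (prod_vcat A B) (fst p) \<and> Comp (prod_vcat A B) (fst p) (snd p) = h"
      obtain a b c d where pe: "p = ((a,b),(c,d))" by (metis prod.collapse)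
      have "vfac1 A f = (a,c)" using p pe hfg by (intro vfac1_eq[OF A]) auto
      moreover have "vfac1 B g = (b,d)" using p pe hfg by (intro vfac1_eq[OF B]) auto
      ultimately show "p = ((upM A f, upM B g),(upE A f, upE B g))" using pe by (simp add: upM_def upE_def)
    qed
  qed
  have e2: "\<exists>!p. fst p \<in> Cov (prod_vcat A B) \<and> snd p \<in> Con (prod_vcat A B) \<and>
        Cod (prod_vcat A B) (snd p) = Dom (prod_vcat A B) (fst p) \<and> Comp (prod_vcat A B) (fst p) (snd p) = h"
    if h: "h \<in> Arr (prod_vcat A B)" for h
  proof -
    obtain f g where hfg: "h = (f,g)" "f \<in> Arr A" "g \<in> Arr B" using h by auto
    show ?thesis
    proof (rule ex1I[of _ "((loE A f, loE B g),(loM A f, loM B g))"])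
      show "fst ((loE A f, loE B g),(loM A f, loM B g)) \<in> Cov (prod_vcat A B) \<and>
    snd ((loE A f, loE B g),(loM A f, loM B g)) \<in> Con (prod_vcat A B) \<and>
    Cod (prod_vcat A B) (snd ((loE A f, loE B g),(loM A f, loM B g))) = Dom (prod_vcat A B) (fst ((loE A f, loE B g),(loM A f, loM B g))) \<and>
    Comp (prod_vcat A B) (fst ((loE A f, loE B g),(loM A f, loM B g))) (snd ((loE A f, loE B g),(loM A f, loM B g))) = h"
        using vfac2_prop[OF A hfg(2)] vfac2_prop[OF B hfg(3)] hfg by simp
    next
      fix p assume p: "fst p \<in> Cov (prod_vcat A B) \<and> snd p \<in> Con (prod_vcat A B) \<and>
        Cod (prod_vcat A B) (snd p) = Dom (prod_vcat A B) (fst p) \<and> Comp (prod_vcat A B) (fst p) (snd p) = h"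
      obtain a b c d where pe: "p = ((a,b),(c,d))" by (metis prod.collapse)
      have "vfac2 A f = (a,c)" using p pe hfg by (intro vfac2_eq[OF A]) auto
      moreover have "vfac2 B g = (b,d)" using p pe hfg by (intro vfac2_eq[OF B]) auto
      ultimately show "p = ((loE A f, loE B g),(loM A f, loM B g))" using pe by (simp add: loM_def loE_def)
    qed
  qed
  show ?thesis unfolding is_variance_def
    using prod_is_cat[OF cA cB] s1 s2 e1 e2 by blast
qed

lemma prod_fac:
  assumes A: "is_variance A" and B: "is_variance B" and f: "f \<in> Arr A" and g: "g \<in> Arr B"
  shows "upE (prod_vcat A B) (f,g) = (upE A f, upE B g)" "upM (prod_vcat A B) (f,g) = (upM A f, upM B g)"
proof -
  have "vfac1 (prod_vcat A B) (f,g) = ((upM A f, upM B g),(upE A f, upE B g))"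
    using vfac1_prop[OF A f] vfac1_prop[OF B g] f g by (intro vfac1_eq[OF prod_variance[OF A B]]) auto
  then show "upE (prod_vcat A B) (f,g) = (upE A f, upE B g)" "upM (prod_vcat A B) (f,g) = (upM A f, upM B g)"
    by (simp_all add: upE_def upM_def)
qed

lemma comp_hom: "is_cat C \<Longrightarrow> f \<in> hom C a b \<Longrightarrow> g \<in> hom C b c \<Longrightarrow> Comp C g f \<in> hom C a c"
  using cat_comp by (fastforce simp: hom_def)

lemma assoc_hom: "is_cat C \<Longrightarrow> f \<in> hom C a b \<Longrightarrow> g \<in> hom C b c \<Longrightarrow> h \<in> hom C c d \<Longrightarrow>
   Comp C h (Comp C g f) = Comp C (Comp C h g) f"
  using cat_assoc by (fastforce simp: hom_def)

lemma assoc4: "is_cat C \<Longrightarrow> f \<in> hom C a b \<Longrightarrow> g \<in> hom C b c \<Longrightarrow> h \<in> hom C c d \<Longrightarrow> k \<in> hom C d e \<Longrightarrow>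
   Comp C (Comp C k h) (Comp C g f) = Comp C k (Comp C (Comp C h g) f)"
proof -
  assume C: "is_cat C" and f: "f \<in> hom C a b" and g: "g \<in> hom C b c" and h: "h \<in> hom C c d" and k: "k \<in> hom C d e"
  have "Comp C (Comp C k h) (Comp C g f) = Comp C k (Comp C h (Comp C g f))"
    using assoc_hom[OF C comp_hom[OF C f g] h k] by simp
  also have "\<dots> = Comp C k (Comp C (Comp C h g) f)" using assoc_hom[OF C f g h] by simp
  finally show ?thesis .
qed

lemma wedge_morph_cong:
  "(\<forall>x\<in>Obj R. \<eta> x = \<eta>' x) \<Longrightarrow> (\<forall>x\<in>Obj R. \<theta> x = \<theta>' x) \<Longrightarrow>
   wedge_morph C R c \<eta> d \<theta> h = wedge_morph C R c \<eta>' d \<theta>' h"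
  by (simp add: wedge_morph_def)

lemma wedge_comp:
  assumes C: "is_cat C" and R: "is_cat R" and w: "is_wedge A C Go Ga R Lo La d \<omega>" and k: "k \<in> hom C c d"
    and ty: "\<And>f. f \<in> Arr R \<Longrightarrow> Ga (upE A (La f)) \<in> hom C (Go (Lo (Dom R f))) (Go' f)
               \<and> Ga (upM A (La f)) \<in> hom C (Go (Lo (Cod R f))) (Go' f)"
  shows "is_wedge A C Go Ga R Lo La c (\<lambda>x. Comp C (\<omega> x) k)"
  unfolding is_wedge_def
proof (intro conjI ballI)
  show "c \<in> Obj C" using k C cat_dom by (fastforce simp: hom_def)
next
  fix x assume "x \<in> Obj R"
  then show "Comp C (\<omega> x) k \<in> hom C c (Go (Lo x))" using w k comp_hom[OF C] by (auto simp: is_wedge_def)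
next
  fix f assume f: "f \<in> Arr R"
  have o: "Dom R f \<in> Obj R" "Cod R f \<in> Obj R" using cat_dom[OF R f] cat_cod[OF R f] by simp_all
  have w1: "\<omega> (Dom R f) \<in> hom C d (Go (Lo (Dom R f)))" "\<omega> (Cod R f) \<in> hom C d (Go (Lo (Cod R f)))"
    using w o by (auto simp: is_wedge_def)
  have eq: "Comp C (Ga (upE A (La f))) (\<omega> (Dom R f)) = Comp C (Ga (upM A (La f))) (\<omega> (Cod R f))"
    using w f by (auto simp: is_wedge_def)
  show "Comp C (Ga (upE A (La f))) (Comp C (\<omega> (Dom R f)) k) = Comp C (Ga (upM A (La f))) (Comp C (\<omega> (Cod R f)) k)"
    using assoc_hom[OF C k w1(1)] assoc_hom[OF C k w1(2)] ty[OF f] eq by auto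
qed

locale ctx =
  fixes A :: "('oa,'aa,'za) vcat_scheme" and B :: "('ob,'ab,'zb) vcat_scheme"
    and C :: "('oc,'ac,'zc) cat_scheme"
    and R1 :: "('r1,'b1,'z1) cat_scheme" and R2 :: "('r2,'b2,'z2) cat_scheme"
    and L1o :: "'r1 \<Rightarrow> 'oa" and L1a :: "'b1 \<Rightarrow> 'aa"
    and L2o :: "'r2 \<Rightarrow> 'ob" and L2a :: "'b2 \<Rightarrow> 'ab"
    and Fo :: "'oa \<times> 'ob \<Rightarrow> 'oc" and Fa :: "'aa \<times> 'ab \<Rightarrow> 'ac"
    and Eo :: "'ob \<Rightarrow> 'oc" and \<omega> :: "'ob \<Rightarrow> 'r1 \<Rightarrow> 'ac"
    and Ea :: "'ab \<Rightarrow> 'ac"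
  assumes A: "is_variance A" and B: "is_variance B" and C: "is_cat C"
    and R1: "is_cat R1" and R2: "is_cat R2"
    and L1: "is_functor R1 A L1o L1a" and L2: "is_functor R2 B L2o L2a"
    and F: "is_vfunctor (prod_vcat A B) C Fo Fa"
    and ends: "\<forall>b\<in>Obj B. is_end A C (\<lambda>x. Fo (x, b)) (\<lambda>f. Fa (f, Id B b)) R1 L1o L1a (Eo b) (\<omega> b)"
    and E: "is_vfunctor B C Eo Ea"
    and E_nat: "\<forall>x\<in>Obj R1. \<forall>g\<in>Arr B.
        Comp C (Fa (Id A (L1o x), g)) (\<omega> (vsrc B g) x) = Comp C (\<omega> (vtgt B g) x) (Ea g)"
begin

abbreviation "PP \<equiv> prod_vcat A B"
abbreviation "RP \<equiv> prod_cat R1 R2"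
abbreviation "LLo \<equiv> (\<lambda>(x,y). (L1o x, L2o y))"
abbreviation "LLa \<equiv> (\<lambda>(f,g). (L1a f, L2a g))"
abbreviation "tlf \<theta> \<equiv> tilde_fam C R1 R2 L2o \<omega> \<theta>"

lemma PV: "is_variance PP" using prod_variance[OF A B] .
lemma cA: "is_cat A" and cB: "is_cat B" using var_cat[OF A] var_cat[OF B] by simp_all

lemma L1f: "f \<in> Arr R1 \<Longrightarrow> L1a f \<in> Arr A \<and> Dom A (L1a f) = L1o (Dom R1 f) \<and> Cod A (L1a f) = L1o (Cod R1 f)"
  and L1o: "x \<in> Obj R1 \<Longrightarrow> L1o x \<in> Obj A"
  and L1i: "x \<in> Obj R1 \<Longrightarrow> L1a (Id R1 x) = Id A (L1o x)"
  using L1 by (auto simp: is_functor_def hom_def)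

lemma L2f: "f \<in> Arr R2 \<Longrightarrow> L2a f \<in> Arr B \<and> Dom B (L2a f) = L2o (Dom R2 f) \<and> Cod B (L2a f) = L2o (Cod R2 f)"
  and L2o: "x \<in> Obj R2 \<Longrightarrow> L2o x \<in> Obj B"
  and L2i: "x \<in> Obj R2 \<Longrightarrow> L2a (Id R2 x) = Id B (L2o x)"
  using L2 by (auto simp: is_functor_def hom_def)

lemma Fa_cov: "p \<in> Cov A \<times> Cov B \<Longrightarrow> Fa p \<in> hom C (Fo (Dom PP p)) (Fo (Cod PP p))"
  using vfun_ty_cov[OF PV F] by simp

lemma Fa_con: "p \<in> Con A \<times> Con B \<Longrightarrow> Fa p \<in> hom C (Fo (Cod PP p)) (Fo (Dom PP p))"
  using vfun_ty_con[OF PV F] by simp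

lemma Ea_cov: "g \<in> Cov B \<Longrightarrow> Ea g \<in> hom C (Eo (Dom B g)) (Eo (Cod B g))"
  using vfun_ty_cov[OF B E] by simp
lemma Ea_con: "g \<in> Con B \<Longrightarrow> Ea g \<in> hom C (Eo (Cod B g)) (Eo (Dom B g))"
  using vfun_ty_con[OF B E] by simp

lemma om_wedge: "b \<in> Obj B \<Longrightarrow> is_wedge A C (\<lambda>x. Fo (x, b)) (\<lambda>f. Fa (f, Id B b)) R1 L1o L1a (Eo b) (\<omega> b)"
  using ends by (simp add: is_end_def)

lemma om_hom: "b \<in> Obj B \<Longrightarrow> x \<in> Obj R1 \<Longrightarrow> \<omega> b x \<in> hom C (Eo b) (Fo (L1o x, b))"
  using om_wedge by (simp add: is_wedge_def)

lemma Fb_ty: assumes b: "b \<in> Obj B" and f: "f \<in> Arr R1"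
  shows "Fa (upE A (L1a f), Id B b) \<in> hom C (Fo (L1o (Dom R1 f), b)) (Fo (Cod A (upE A (L1a f)), b))
    \<and> Fa (upM A (L1a f), Id B b) \<in> hom C (Fo (L1o (Cod R1 f), b)) (Fo (Cod A (upE A (L1a f)), b))"
proof -
  have a: "L1a f \<in> Arr A" "Dom A (L1a f) = L1o (Dom R1 f)" "Cod A (L1a f) = L1o (Cod R1 f)" using L1f f by auto
  note p = vfac1_prop[OF A a(1)] upE_dom[OF A a(1)]
  have i: "Id B b \<in> Cov B" "Id B b \<in> Con B" "Dom B (Id B b) = b" "Cod B (Id B b) = b"
    using var_id_cov[OF B b] var_id_con[OF B b] cat_id[OF cB b] by auto
  show ?thesis using Fa_cov[of "(upE A (L1a f), Id B b)"] Fa_con[of "(upM A (L1a f), Id B b)"] p i a by simp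
qed

lemma U:
  assumes b: "b \<in> Obj B" and k: "k1 \<in> hom C c (Eo b)" "k2 \<in> hom C c (Eo b)"
    and eq: "\<forall>x\<in>Obj R1. Comp C (\<omega> b x) k1 = Comp C (\<omega> b x) k2"
  shows "k1 = k2"
proof -
  have w: "is_wedge A C (\<lambda>x. Fo (x, b)) (\<lambda>f. Fa (f, Id B b)) R1 L1o L1a c (\<lambda>x. Comp C (\<omega> b x) k1)"
    by (rule wedge_comp[OF C R1 om_wedge[OF b] k(1), of "\<lambda>f. Fo (Cod A (upE A (L1a f)), b)"])
      (use Fb_ty[OF b] in auto)
  then have "\<exists>!h. wedge_morph C R1 c (\<lambda>x. Comp C (\<omega> b x) k1) (Eo b) (\<omega> b) h"
    using ends b by (simp add: is_end_def)
  moreover have "wedge_morph C R1 c (\<lambda>x. Comp C (\<omega> b x) k1) (Eo b) (\<omega> b) k1"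
    "wedge_morph C R1 c (\<lambda>x. Comp C (\<omega> b x) k1) (Eo b) (\<omega> b) k2"
    using k eq by (auto simp: wedge_morph_def)
  ultimately show ?thesis by blast
qed

end

context ctx begin

lemma idfacts: assumes b: "b \<in> Obj B" shows "Id B b \<in> Cov B" "Id B b \<in> Con B" "Dom B (Id B b) = b" "Cod B (Id B b) = b"
  "upE B (Id B b) = Id B b" "upM B (Id B b) = Id B b" "Id B b \<in> Arr B"
  using var_id_cov[OF B b] var_id_con[OF B b] cat_id[OF cB b] cov_fac[OF B var_id_cov[OF B b]] by auto

lemma idfactsA: assumes b: "b \<in> Obj A" shows "Id A b \<in> Cov A" "Id A b \<in> Con A" "Dom A (Id A b) = b" "Cod A (Id A b) = b"
  "upE A (Id A b) = Id A b" "upM A (Id A b) = Id A b" "Id A b \<in> Arr A"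
  using var_id_cov[OF A b] var_id_con[OF A b] cat_id[OF cA b] cov_fac[OF A var_id_cov[OF A b]] by auto

lemma fwd:
  assumes w: "is_wedge B C Eo Ea R2 L2o L2a c \<theta>"
  shows "is_wedge PP C Fo Fa RP LLo LLa c (tlf \<theta>)"
  unfolding is_wedge_def
proof (intro conjI ballI)
  show "c \<in> Obj C" using w by (simp add: is_wedge_def)
next
  fix p assume "p \<in> Obj RP"
  then obtain x y where p: "p = (x,y)" "x \<in> Obj R1" "y \<in> Obj R2" by auto
  have "\<theta> y \<in> hom C c (Eo (L2o y))" using w p by (simp add: is_wedge_def)
  then show "tlf \<theta> p \<in> hom C c (Fo (LLo p))"
    using p comp_hom[OF C _ om_hom[OF L2o[OF p(3)] p(2)]] by (simp add: tilde_fam_def)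
next
  fix q assume "q \<in> Arr RP"
  then obtain f g where q: "q = (f,g)" "f \<in> Arr R1" "g \<in> Arr R2" by auto
  define x where "x = Dom R1 f"
  define x' where "x' = Cod R1 f"
  define y where "y = Dom R2 g"
  define y' where "y' = Cod R2 g"
  define a where "a = L1a f"
  define b where "b = L2a g"
  have ox: "x \<in> Obj R1" "x' \<in> Obj R1" "y \<in> Obj R2" "y' \<in> Obj R2"
    using cat_dom[OF R1 q(2)] cat_cod[OF R1 q(2)] cat_dom[OF R2 q(3)] cat_cod[OF R2 q(3)] x_def x'_def y_def y'_def by simp_all
  have a: "a \<in> Arr A" "Dom A a = L1o x" "Cod A a = L1o x'" using L1f q a_def x_def x'_def by auto
  have b: "b \<in> Arr B" "Dom B b = L2o y" "Cod B b = L2o y'" using L2f q b_def y_def y'_def by auto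
  define ae where "ae = upE A a"
  define am where "am = upM A a"
  define be where "be = upE B b"
  define bm where "bm = upM B b"
  define bt where "bt = Cod B be"
  define at where "at = Cod A ae"
  have fa: "am \<in> Con A" "ae \<in> Cov A" "Dom A am = at" "Dom A ae = L1o x" "Cod A am = L1o x'"
    using vfac1_prop[OF A a(1)] upE_dom[OF A a(1)] a unfolding ae_def am_def at_def by auto
  have fb: "bm \<in> Con B" "be \<in> Cov B" "Dom B bm = bt" "Dom B be = L2o y" "Cod B bm = L2o y'"
    using vfac1_prop[OF B b(1)] upE_dom[OF B b(1)] b unfolding be_def bm_def bt_def by auto
  have aea: "ae \<in> Arr A" "am \<in> Arr A" using fa var_cov[OF A] var_con[OF A] by auto
  have bea: "be \<in> Arr B" "bm \<in> Arr B" using fb var_cov[OF B] var_con[OF B] by auto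
  have obt: "bt \<in> Obj B" using cat_cod[OF cB bea(1)] bt_def by simp
  have oLx: "L1o x \<in> Obj A" "L1o x' \<in> Obj A" "L2o y \<in> Obj B" "L2o y' \<in> Obj B" using ox L1o L2o by auto
  have oat: "at \<in> Obj A" using cat_cod[OF cA aea(1)] at_def by simp
  note iB = idfacts[OF obt] and iA = idfactsA[OF oLx(1)] idfactsA[OF oLx(2)]
  have d1: "Fa (ae, be) = Comp C (Fa (ae, Id B bt)) (Fa (Id A (L1o x), be))"
  proof -
    have "Comp PP (ae, Id B bt) (Id A (L1o x), be) = (ae, be)"
      using cat_idr[OF cA aea(1)] cat_idl[OF cB bea(1)] fa bt_def by simp
    moreover have "Fa (Comp PP (ae, Id B bt) (Id A (L1o x), be)) = Comp C (Fa (ae, Id B bt)) (Fa (Id A (L1o x), be))"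
      by (rule vfun_comp_cov[OF PV C F]) (use fa fb iB iA bt_def in auto)
    ultimately show ?thesis by simp
  qed
  have d2: "Fa (am, bm) = Comp C (Fa (am, Id B bt)) (Fa (Id A (L1o x'), bm))"
  proof -
    have "Comp PP (Id A (L1o x'), bm) (am, Id B bt) = (am, bm)"
      using cat_idl[OF cA aea(2)] cat_idr[OF cB bea(2)] fa fb by simp
    moreover have "Fa (Comp PP (Id A (L1o x'), bm) (am, Id B bt)) = Comp C (Fa (am, Id B bt)) (Fa (Id A (L1o x'), bm))"
      by (rule vfun_comp_con[OF PV C F]) (use fa fb iB iA in auto)
    ultimately show ?thesis by simp
  qed
  have h1: "Fa (ae, Id B bt) \<in> hom C (Fo (L1o x, bt)) (Fo (at, bt))"
    using Fa_cov[of "(ae, Id B bt)"] fa iB at_def by simp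
  have h2: "Fa (Id A (L1o x), be) \<in> hom C (Fo (L1o x, L2o y)) (Fo (L1o x, bt))"
    using Fa_cov[of "(Id A (L1o x), be)"] fb iA bt_def by simp
  have h3: "\<omega> (L2o y) x \<in> hom C (Eo (L2o y)) (Fo (L1o x, L2o y))" using om_hom oLx ox by simp
  have h4: "\<theta> y \<in> hom C c (Eo (L2o y))" using w ox by (simp add: is_wedge_def)
  have h5: "\<omega> bt x \<in> hom C (Eo bt) (Fo (L1o x, bt))" using om_hom obt ox by simp
  have h6: "Ea be \<in> hom C (Eo (L2o y)) (Eo bt)" using Ea_cov fb bt_def by fastforce
  have k1: "Fa (am, Id B bt) \<in> hom C (Fo (L1o x', bt)) (Fo (at, bt))"
    using Fa_con[of "(am, Id B bt)"] fa iB by simp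
  have k2: "Fa (Id A (L1o x'), bm) \<in> hom C (Fo (L1o x', L2o y')) (Fo (L1o x', bt))"
    using Fa_con[of "(Id A (L1o x'), bm)"] fb iA by simp
  have k3: "\<omega> (L2o y') x' \<in> hom C (Eo (L2o y')) (Fo (L1o x', L2o y'))" using om_hom oLx ox by simp
  have k4: "\<theta> y' \<in> hom C c (Eo (L2o y'))" using w ox by (simp add: is_wedge_def)
  have k5: "\<omega> bt x' \<in> hom C (Eo bt) (Fo (L1o x', bt))" using om_hom obt ox by simp
  have k6: "Ea bm \<in> hom C (Eo (L2o y')) (Eo bt)" using Ea_con fb by fastforce
  have n1: "Comp C (Fa (Id A (L1o x), be)) (\<omega> (L2o y) x) = Comp C (\<omega> bt x) (Ea be)"
    using E_nat ox bea cov_fac[OF B fb(2)] fb bt_def by force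
  have n2: "Comp C (Fa (Id A (L1o x'), bm)) (\<omega> (L2o y') x') = Comp C (\<omega> bt x') (Ea bm)"
    using E_nat ox bea con_fac[OF B fb(1)] fb by force
  have wt: "Comp C (Ea be) (\<theta> y) = Comp C (Ea bm) (\<theta> y')"
    using w q unfolding is_wedge_def be_def bm_def b_def y_def y'_def by blast
  have wo: "Comp C (Fa (ae, Id B bt)) (\<omega> bt x) = Comp C (Fa (am, Id B bt)) (\<omega> bt x')"
    using om_wedge[OF obt] q unfolding is_wedge_def ae_def am_def a_def x_def x'_def by blast
  have "Comp C (Fa (ae, be)) (Comp C (\<omega> (L2o y) x) (\<theta> y))
      = Comp C (Fa (ae, Id B bt)) (Comp C (Comp C (Fa (Id A (L1o x), be)) (\<omega> (L2o y) x)) (\<theta> y))"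
    using d1 assoc4[OF C h4 h3 h2 h1] by simp
  also have "\<dots> = Comp C (Comp C (Fa (ae, Id B bt)) (\<omega> bt x)) (Comp C (Ea be) (\<theta> y))"
    using n1 assoc4[OF C h4 h6 h5 h1] by simp
  also have "\<dots> = Comp C (Comp C (Fa (am, Id B bt)) (\<omega> bt x')) (Comp C (Ea bm) (\<theta> y'))"
    using wo wt by simp
  also have "\<dots> = Comp C (Fa (am, Id B bt)) (Comp C (Comp C (Fa (Id A (L1o x'), bm)) (\<omega> (L2o y') x')) (\<theta> y'))"
    using n2 assoc4[OF C k4 k6 k5 k1] by simp
  also have "\<dots> = Comp C (Fa (am, bm)) (Comp C (\<omega> (L2o y') x') (\<theta> y'))"
    using d2 assoc4[OF C k4 k3 k2 k1] by simp
  finally have main: "Comp C (Fa (ae, be)) (Comp C (\<omega> (L2o y) x) (\<theta> y)) = Comp C (Fa (am, bm)) (Comp C (\<omega> (L2o y') x') (\<theta> y'))" .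
  have pe: "upE PP (LLa q) = (ae, be)" "upM PP (LLa q) = (am, bm)"
    using prod_fac[OF A B a(1) b(1)] q unfolding a_def b_def ae_def be_def am_def bm_def by auto
  show "Comp C (Fa (upE PP (LLa q))) (tlf \<theta> (Dom RP q)) = Comp C (Fa (upM PP (LLa q))) (tlf \<theta> (Cod RP q))"
    using main pe q ox unfolding x_def x'_def y_def y'_def by (simp add: tilde_fam_def)
qed

end

context ctx begin

definition lift where
  "lift c \<eta> = restrict (\<lambda>y. THE h. wedge_morph C R1 c (\<lambda>x. \<eta> (x,y)) (Eo (L2o y)) (\<omega> (L2o y)) h) (Obj R2)"

lemma slice_wedge:
  assumes w: "is_wedge PP C Fo Fa RP LLo LLa c \<eta>" and y: "y \<in> Obj R2"
  shows "is_wedge A C (\<lambda>x. Fo (x, L2o y)) (\<lambda>f. Fa (f, Id B (L2o y))) R1 L1o L1a c (\<lambda>x. \<eta> (x,y))"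
  unfolding is_wedge_def
proof (intro conjI ballI)
  show "c \<in> Obj C" using w by (simp add: is_wedge_def)
next
  fix x assume "x \<in> Obj R1"
  then show "\<eta> (x, y) \<in> hom C c (Fo (L1o x, L2o y))" using w y by (auto simp: is_wedge_def)
next
  fix f assume f: "f \<in> Arr R1"
  have i: "Id R2 y \<in> Arr R2" "Dom R2 (Id R2 y) = y" "Cod R2 (Id R2 y) = y" using cat_id[OF R2 y] by auto
  have q: "(f, Id R2 y) \<in> Arr RP" using f i by simp
  have a: "L1a f \<in> Arr A" using L1f f by auto
  note ib = idfacts[OF L2o[OF y]]
  have "upE PP (LLa (f, Id R2 y)) = (upE A (L1a f), Id B (L2o y))" "upM PP (LLa (f, Id R2 y)) = (upM A (L1a f), Id B (L2o y))"
    using prod_fac[OF A B a ib(7)] L2i[OF y] ib by auto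
  then show "Comp C (Fa (upE A (L1a f), Id B (L2o y))) (\<eta> (Dom R1 f, y)) =
         Comp C (Fa (upM A (L1a f), Id B (L2o y))) (\<eta> (Cod R1 f, y))"
    using w q i unfolding is_wedge_def by (metis prodc_simps(3,4))
qed

lemma lift_props:
  assumes w: "is_wedge PP C Fo Fa RP LLo LLa c \<eta>" and y: "y \<in> Obj R2"
  shows "lift c \<eta> y \<in> hom C c (Eo (L2o y)) \<and> (\<forall>x\<in>Obj R1. Comp C (\<omega> (L2o y) x) (lift c \<eta> y) = \<eta> (x,y))"
proof -
  have "\<exists>!h. wedge_morph C R1 c (\<lambda>x. \<eta> (x,y)) (Eo (L2o y)) (\<omega> (L2o y)) h"
    using ends L2o[OF y] slice_wedge[OF w y] by (simp add: is_end_def)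
  from theI'[OF this] show ?thesis using y unfolding lift_def wedge_morph_def by simp
qed

lemma tl_lift: "is_wedge PP C Fo Fa RP LLo LLa c \<eta> \<Longrightarrow> p \<in> Obj R1 \<times> Obj R2 \<Longrightarrow> tlf (lift c \<eta>) p = \<eta> p"
  using lift_props by (auto simp: tilde_fam_def)

lemma lift_ext: "lift c \<eta> \<in> extensional (Obj R2)"
  unfolding lift_def by simp

lemma lift_wedge:
  assumes w: "is_wedge PP C Fo Fa RP LLo LLa c \<eta>"
  shows "is_wedge B C Eo Ea R2 L2o L2a c (lift c \<eta>)"
  unfolding is_wedge_def
proof (intro conjI ballI)
  show "c \<in> Obj C" using w by (simp add: is_wedge_def)
next
  fix y assume "y \<in> Obj R2" then show "lift c \<eta> y \<in> hom C c (Eo (L2o y))" using lift_props[OF w] by blast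
next
  fix g assume g: "g \<in> Arr R2"
  define y where "y = Dom R2 g"
  define y' where "y' = Cod R2 g"
  define b where "b = L2a g"
  have oy: "y \<in> Obj R2" "y' \<in> Obj R2" using cat_dom[OF R2 g] cat_cod[OF R2 g] y_def y'_def by simp_all
  have b: "b \<in> Arr B" "Dom B b = L2o y" "Cod B b = L2o y'" using L2f g b_def y_def y'_def by auto
  define be where "be = upE B b"
  define bm where "bm = upM B b"
  define bt where "bt = Cod B be"
  have fb: "bm \<in> Con B" "be \<in> Cov B" "Dom B bm = bt" "Dom B be = L2o y" "Cod B bm = L2o y'"
    using vfac1_prop[OF B b(1)] upE_dom[OF B b(1)] b unfolding be_def bm_def bt_def by auto
  have bea: "be \<in> Arr B" "bm \<in> Arr B" using fb var_cov[OF B] var_con[OF B] by auto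
  have obt: "bt \<in> Obj B" using cat_cod[OF cB bea(1)] bt_def by simp
  have l1: "lift c \<eta> y \<in> hom C c (Eo (L2o y))" "lift c \<eta> y' \<in> hom C c (Eo (L2o y'))"
    using lift_props[OF w oy(1)] lift_props[OF w oy(2)] by simp_all
  have h6: "Ea be \<in> hom C (Eo (L2o y)) (Eo bt)" using Ea_cov fb bt_def by fastforce
  have k6: "Ea bm \<in> hom C (Eo (L2o y')) (Eo bt)" using Ea_con fb by fastforce
  have "Comp C (Ea be) (lift c \<eta> y) = Comp C (Ea bm) (lift c \<eta> y')"
  proof (rule U[OF obt comp_hom[OF C l1(1) h6] comp_hom[OF C l1(2) k6]], intro ballI)
    fix x assume x: "x \<in> Obj R1"
    have oLx: "L1o x \<in> Obj A" using L1o x by auto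
    note iA = idfactsA[OF oLx]
    have h5: "\<omega> bt x \<in> hom C (Eo bt) (Fo (L1o x, bt))" using om_hom obt x by simp
    have h3: "\<omega> (L2o y) x \<in> hom C (Eo (L2o y)) (Fo (L1o x, L2o y))" using om_hom L2o oy x by simp
    have k3: "\<omega> (L2o y') x \<in> hom C (Eo (L2o y')) (Fo (L1o x, L2o y'))" using om_hom L2o oy x by simp
    have h2: "Fa (Id A (L1o x), be) \<in> hom C (Fo (L1o x, L2o y)) (Fo (L1o x, bt))"
      using Fa_cov[of "(Id A (L1o x), be)"] fb iA bt_def by simp
    have k2: "Fa (Id A (L1o x), bm) \<in> hom C (Fo (L1o x, L2o y')) (Fo (L1o x, bt))"
      using Fa_con[of "(Id A (L1o x), bm)"] fb iA by simp
    have n1: "Comp C (Fa (Id A (L1o x), be)) (\<omega> (L2o y) x) = Comp C (\<omega> bt x) (Ea be)"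
      using E_nat x bea cov_fac[OF B fb(2)] fb bt_def by force
    have n2: "Comp C (Fa (Id A (L1o x), bm)) (\<omega> (L2o y') x) = Comp C (\<omega> bt x) (Ea bm)"
      using E_nat x bea con_fac[OF B fb(1)] fb by force
    have ix: "Id R1 x \<in> Arr R1" "Dom R1 (Id R1 x) = x" "Cod R1 (Id R1 x) = x" using cat_id[OF R1 x] by auto
    have q: "(Id R1 x, g) \<in> Arr RP" using ix g by simp
    have pe: "upE PP (LLa (Id R1 x, g)) = (Id A (L1o x), be)" "upM PP (LLa (Id R1 x, g)) = (Id A (L1o x), bm)"
      using prod_fac[OF A B iA(7) b(1)] L1i[OF x] iA be_def bm_def b_def by auto
    have weq: "Comp C (Fa (Id A (L1o x), be)) (\<eta> (x, y)) = Comp C (Fa (Id A (L1o x), bm)) (\<eta> (x, y'))"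
      using w q ix pe unfolding is_wedge_def y_def y'_def by (metis prodc_simps(3,4))
    have "Comp C (\<omega> bt x) (Comp C (Ea be) (lift c \<eta> y)) = Comp C (Comp C (\<omega> bt x) (Ea be)) (lift c \<eta> y)"
      using assoc_hom[OF C l1(1) h6 h5] .
    also have "\<dots> = Comp C (Fa (Id A (L1o x), be)) (Comp C (\<omega> (L2o y) x) (lift c \<eta> y))"
      using n1 assoc_hom[OF C l1(1) h3 h2] by simp
    also have "\<dots> = Comp C (Fa (Id A (L1o x), be)) (\<eta> (x, y))" using lift_props[OF w oy(1)] x by simp
    also have "\<dots> = Comp C (Fa (Id A (L1o x), bm)) (\<eta> (x, y'))" using weq .
    also have "\<dots> = Comp C (Fa (Id A (L1o x), bm)) (Comp C (\<omega> (L2o y') x) (lift c \<eta> y'))"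
      using lift_props[OF w oy(2)] x by simp
    also have "\<dots> = Comp C (Comp C (\<omega> bt x) (Ea bm)) (lift c \<eta> y')"
      using n2 assoc_hom[OF C l1(2) k3 k2] by simp
    also have "\<dots> = Comp C (\<omega> bt x) (Comp C (Ea bm) (lift c \<eta> y'))"
      using assoc_hom[OF C l1(2) k6 h5] by simp
    finally show "Comp C (\<omega> bt x) (Comp C (Ea be) (lift c \<eta> y)) = Comp C (\<omega> bt x) (Comp C (Ea bm) (lift c \<eta> y'))" .
  qed
  then show "Comp C (Ea (upE B (L2a g))) (lift c \<eta> (Dom R2 g)) = Comp C (Ea (upM B (L2a g))) (lift c \<eta> (Cod R2 g))"
    unfolding be_def bm_def b_def y_def y'_def .
qed

lemma morph_iff:
  assumes w1: "is_wedge B C Eo Ea R2 L2o L2a c \<theta>" and w2: "is_wedge B C Eo Ea R2 L2o L2a d \<theta>'"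
  shows "wedge_morph C R2 c \<theta> d \<theta>' h \<longleftrightarrow> wedge_morph C RP c (tlf \<theta>) d (tlf \<theta>') h"
proof
  assume m: "wedge_morph C R2 c \<theta> d \<theta>' h"
  have h: "h \<in> hom C c d" using m by (simp add: wedge_morph_def)
  show "wedge_morph C RP c (tlf \<theta>) d (tlf \<theta>') h"
    unfolding wedge_morph_def
  proof (intro conjI ballI)
    show "h \<in> hom C c d" by fact
    fix p assume "p \<in> Obj RP"
    then obtain x y where p: "p = (x,y)" "x \<in> Obj R1" "y \<in> Obj R2" by auto
    have t: "\<theta>' y \<in> hom C d (Eo (L2o y))" using w2 p by (simp add: is_wedge_def)
    have "Comp C (\<omega> (L2o y) x) (Comp C (\<theta>' y) h) = Comp C (Comp C (\<omega> (L2o y) x) (\<theta>' y)) h"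
      using assoc_hom[OF C h t om_hom[OF L2o[OF p(3)] p(2)]] .
    then show "Comp C (tlf \<theta>' p) h = tlf \<theta> p"
      using m p unfolding wedge_morph_def tilde_fam_def by simp
  qed
next
  assume m: "wedge_morph C RP c (tlf \<theta>) d (tlf \<theta>') h"
  have h: "h \<in> hom C c d" using m by (simp add: wedge_morph_def)
  show "wedge_morph C R2 c \<theta> d \<theta>' h"
    unfolding wedge_morph_def
  proof (intro conjI ballI)
    show "h \<in> hom C c d" by fact
    fix y assume y: "y \<in> Obj R2"
    have t: "\<theta>' y \<in> hom C d (Eo (L2o y))" "\<theta> y \<in> hom C c (Eo (L2o y))" using w1 w2 y by (auto simp: is_wedge_def)
    show "Comp C (\<theta>' y) h = \<theta> y"
    proof (rule U[OF L2o[OF y] comp_hom[OF C h t(1)] t(2)], intro ballI)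
      fix x assume x: "x \<in> Obj R1"
      have "Comp C (\<omega> (L2o y) x) (Comp C (\<theta>' y) h) = Comp C (Comp C (\<omega> (L2o y) x) (\<theta>' y)) h"
        using assoc_hom[OF C h t(1) om_hom[OF L2o[OF y] x]] .
      also have "\<dots> = Comp C (tlf \<theta>' (x,y)) h" using x y by (simp add: tilde_fam_def)
      also have "\<dots> = tlf \<theta> (x,y)" using m x y unfolding wedge_morph_def by simp
      also have "\<dots> = Comp C (\<omega> (L2o y) x) (\<theta> y)" using x y by (simp add: tilde_fam_def)
      finally show "Comp C (\<omega> (L2o y) x) (Comp C (\<theta>' y) h) = Comp C (\<omega> (L2o y) x) (\<theta> y)" .
    qed
  qed
qed

lemma tl_inj:
  assumes w1: "is_wedge B C Eo Ea R2 L2o L2a c \<theta>" and w2: "is_wedge B C Eo Ea R2 L2o L2a c \<theta>'"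
    and eq: "\<forall>p\<in>Obj R1 \<times> Obj R2. tlf \<theta> p = tlf \<theta>' p" and y: "y \<in> Obj R2"
  shows "\<theta> y = \<theta>' y"
proof (rule U[OF L2o[OF y]])
  show "\<theta> y \<in> hom C c (Eo (L2o y))" "\<theta>' y \<in> hom C c (Eo (L2o y))" using w1 w2 y by (auto simp: is_wedge_def)
  show "\<forall>x\<in>Obj R1. Comp C (\<omega> (L2o y) x) (\<theta> y) = Comp C (\<omega> (L2o y) x) (\<theta>' y)"
    using eq y by (auto simp: tilde_fam_def)
qed

end

context ctx begin

abbreviation "W1 \<equiv> wedge_cat B C Eo Ea R2 L2o L2a"
abbreviation "W2 \<equiv> wedge_cat PP C Fo Fa RP LLo LLa"
abbreviation "TO \<equiv> tilde_obj C R1 R2 L2o \<omega>"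
abbreviation "TA \<equiv> tilde_arr C R1 R2 L2o \<omega>"

lemma wc_simps:
  "Obj (wedge_cat D C Go Ga R Lo La) = {(c,\<eta>). is_wedge D C Go Ga R Lo La c \<eta> \<and> \<eta> \<in> extensional (Obj R)}"
  "Arr (wedge_cat D C Go Ga R Lo La) = {(v,w,h). v \<in> Obj (wedge_cat D C Go Ga R Lo La) \<and> w \<in> Obj (wedge_cat D C Go Ga R Lo La)
       \<and> wedge_morph C R (fst v) (snd v) (fst w) (snd w) h}"
  "Dom (wedge_cat D C Go Ga R Lo La) = (\<lambda>(v,w,h). v)"
  "Cod (wedge_cat D C Go Ga R Lo La) = (\<lambda>(v,w,h). w)"
  "Id (wedge_cat D C Go Ga R Lo La) = (\<lambda>v. (v, v, Id C (fst v)))"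
  "Comp (wedge_cat D C Go Ga R Lo La) = (\<lambda>(v',w',k) (v,w,h). (v, w', Comp C k h))"
  by (simp_all add: wedge_cat_def Let_def)

lemma TO_simp: "TO (c,\<theta>) = (c, tlf \<theta>)" by (simp add: tilde_obj_def)
lemma TA_simp: "TA (v,w,h) = (TO v, TO w, h)" by (simp add: tilde_arr_def)

lemma tlf_ext: "tlf \<theta> \<in> extensional (Obj R1 \<times> Obj R2)" by (simp add: tilde_fam_def)

lemma obj_map: "v \<in> Obj W1 \<Longrightarrow> TO v \<in> Obj W2"
  using fwd tlf_ext by (auto simp: wc_simps TO_simp)

lemma obj_surj: assumes "w \<in> Obj W2" shows "\<exists>v\<in>Obj W1. w = TO v"
proof -
  obtain c \<eta> where w: "w = (c,\<eta>)" "is_wedge PP C Fo Fa RP LLo LLa c \<eta>" "\<eta> \<in> extensional (Obj R1 \<times> Obj R2)"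
    using assms by (auto simp: wc_simps)
  have "tlf (lift c \<eta>) = \<eta>"
    by (rule extensionalityI[OF tlf_ext w(3)]) (use tl_lift[OF w(2)] in auto)
  moreover have "(c, lift c \<eta>) \<in> Obj W1" using lift_wedge[OF w(2)] lift_ext by (simp add: wc_simps)
  ultimately show ?thesis using w(1) by (intro bexI[where x="(c, lift c \<eta>)"]) (simp_all add: TO_simp)
qed

lemma obj_inj: "inj_on TO (Obj W1)"
proof (rule inj_onI)
  fix v v' assume v: "v \<in> Obj W1" "v' \<in> Obj W1" and eq: "TO v = TO v'"
  obtain c \<theta> where vv: "v = (c,\<theta>)" "is_wedge B C Eo Ea R2 L2o L2a c \<theta>" "\<theta> \<in> extensional (Obj R2)"
    using v by (auto simp: wc_simps)
  obtain c' \<theta>' where vv': "v' = (c',\<theta>')" "is_wedge B C Eo Ea R2 L2o L2a c' \<theta>'" "\<theta>' \<in> extensional (Obj R2)"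
    using v by (auto simp: wc_simps)
  have cc: "c = c'" and tt: "tlf \<theta> = tlf \<theta>'" using eq vv vv' by (auto simp: TO_simp)
  have "\<theta> = \<theta>'"
    by (rule extensionalityI[OF vv(3) vv'(3)], rule tl_inj[OF vv(2)]) (use vv'(2) cc tt in auto)
  then show "v = v'" using vv vv' cc by simp
qed

lemma arr_iff: "v \<in> Obj W1 \<Longrightarrow> w \<in> Obj W1 \<Longrightarrow> (v,w,h) \<in> Arr W1 \<longleftrightarrow> (TO v, TO w, h) \<in> Arr W2"
  using obj_map morph_iff by (auto simp: wc_simps TO_simp)

lemma iso: "is_cat_iso W1 W2 TO TA"
  unfolding is_cat_iso_def
proof (intro conjI)
  show "is_functor W1 W2 TO TA"
    unfolding is_functor_def
  proof (intro conjI ballI impI)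
    fix v assume "v \<in> Obj W1" then show "TO v \<in> Obj W2" by (rule obj_map)
  next
    fix f assume f: "f \<in> Arr W1"
    then obtain v w h where fe: "f = (v,w,h)" "v \<in> Obj W1" "w \<in> Obj W1" by (auto simp: wc_simps)
    then have "(TO v, TO w, h) \<in> Arr W2" using arr_iff f by simp
    then show "TA f \<in> hom W2 (TO (Dom W1 f)) (TO (Cod W1 f))"
      using fe by (simp add: hom_def TA_simp wc_simps(3,4))
  next
    fix v assume "v \<in> Obj W1"
    then show "TA (Id W1 v) = Id W2 (TO v)"
      by (cases v) (simp add: wc_simps TA_simp TO_simp)
  next
    fix f g assume "f \<in> Arr W1" "g \<in> Arr W1" "Cod W1 f = Dom W1 g"
    then show "TA (Comp W1 g f) = Comp W2 (TA g) (TA f)"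
      by (cases f; cases g) (simp add: wc_simps TA_simp)
  qed
next
  show "bij_betw TO (Obj W1) (Obj W2)"
    unfolding bij_betw_def using obj_inj obj_map obj_surj by blast
next
  show "bij_betw TA (Arr W1) (Arr W2)"
    unfolding bij_betw_def
  proof
    show "inj_on TA (Arr W1)"
    proof (rule inj_onI)
      fix f g assume f: "f \<in> Arr W1" and g: "g \<in> Arr W1" and eq: "TA f = TA g"
      obtain v w h where fe: "f = (v,w,h)" "v \<in> Obj W1" "w \<in> Obj W1" using f by (auto simp: wc_simps)
      obtain v' w' h' where ge: "g = (v',w',h')" "v' \<in> Obj W1" "w' \<in> Obj W1" using g by (auto simp: wc_simps)
      have "TO v = TO v'" "TO w = TO w'" "h = h'" using eq fe ge by (auto simp: TA_simp)
      then show "f = g" using obj_inj fe ge by (auto dest: inj_onD)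
    qed
  next
    show "TA ` Arr W1 = Arr W2"
    proof
      show "TA ` Arr W1 \<subseteq> Arr W2"
      proof
        fix a assume "a \<in> TA ` Arr W1"
        then obtain v w h where "a = TA (v,w,h)" "(v,w,h) \<in> Arr W1" by auto
        moreover then have "v \<in> Obj W1" "w \<in> Obj W1" by (auto simp: wc_simps)
        ultimately show "a \<in> Arr W2" using arr_iff by (simp add: TA_simp)
      qed
    next
      show "Arr W2 \<subseteq> TA ` Arr W1"
      proof
        fix a assume a: "a \<in> Arr W2"
        then obtain v0 w0 h where ae: "a = (v0,w0,h)" "v0 \<in> Obj W2" "w0 \<in> Obj W2" by (auto simp: wc_simps)
        obtain v where v: "v \<in> Obj W1" "v0 = TO v" using obj_surj ae by blast
        obtain w where w: "w \<in> Obj W1" "w0 = TO w" using obj_surj ae by blast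
        have "(v,w,h) \<in> Arr W1" using arr_iff[OF v(1) w(1)] a ae v w by simp
        then show "a \<in> TA ` Arr W1" using ae v w by (force simp: TA_simp)
      qed
    qed
  qed
qed

lemma end_fwd:
  assumes e: "is_end B C Eo Ea R2 L2o L2a c \<theta>"
  shows "is_end PP C Fo Fa RP LLo LLa c (tlf \<theta>)"
proof -
  have w: "is_wedge B C Eo Ea R2 L2o L2a c \<theta>" using e by (simp add: is_end_def)
  have "\<exists>!h. wedge_morph C RP d \<eta> c (tlf \<theta>) h" if wd: "is_wedge PP C Fo Fa RP LLo LLa d \<eta>" for d \<eta>
  proof -
    have lw: "is_wedge B C Eo Ea R2 L2o L2a d (lift d \<eta>)" using lift_wedge[OF wd] .
    have "wedge_morph C RP d \<eta> c (tlf \<theta>) h \<longleftrightarrow> wedge_morph C R2 d (lift d \<eta>) c \<theta> h" for h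
    proof -
      have "wedge_morph C RP d \<eta> c (tlf \<theta>) h = wedge_morph C RP d (tlf (lift d \<eta>)) c (tlf \<theta>) h"
        by (rule wedge_morph_cong) (use tl_lift[OF wd] in auto)
      also have "\<dots> = wedge_morph C R2 d (lift d \<eta>) c \<theta> h" using morph_iff[OF lw w] by simp
      finally show ?thesis .
    qed
    moreover have "\<exists>!h. wedge_morph C R2 d (lift d \<eta>) c \<theta> h" using e lw by (simp add: is_end_def)
    ultimately show ?thesis by simp
  qed
  then show ?thesis using fwd[OF w] by (simp add: is_end_def)
qed

lemma end_bwd:
  assumes e: "is_end PP C Fo Fa RP LLo LLa c \<eta>"
  shows "is_end B C Eo Ea R2 L2o L2a c (lift c \<eta>) \<and> (\<forall>p\<in>Obj R1 \<times> Obj R2. \<eta> p = tlf (lift c \<eta>) p)"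
proof -
  have w: "is_wedge PP C Fo Fa RP LLo LLa c \<eta>" using e by (simp add: is_end_def)
  have lw: "is_wedge B C Eo Ea R2 L2o L2a c (lift c \<eta>)" using lift_wedge[OF w] .
  have "\<exists>!h. wedge_morph C R2 d \<theta> c (lift c \<eta>) h" if wd: "is_wedge B C Eo Ea R2 L2o L2a d \<theta>" for d \<theta>
  proof -
    have "wedge_morph C R2 d \<theta> c (lift c \<eta>) h \<longleftrightarrow> wedge_morph C RP d (tlf \<theta>) c \<eta> h" for h
    proof -
      have "wedge_morph C R2 d \<theta> c (lift c \<eta>) h = wedge_morph C RP d (tlf \<theta>) c (tlf (lift c \<eta>)) h"
        using morph_iff[OF wd lw] by simp
      also have "\<dots> = wedge_morph C RP d (tlf \<theta>) c \<eta> h"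
        by (rule wedge_morph_cong) (use tl_lift[OF w] in auto)
      finally show ?thesis .
    qed
    moreover have "\<exists>!h. wedge_morph C RP d (tlf \<theta>) c \<eta> h" using e fwd[OF wd] by (simp add: is_end_def)
    ultimately show ?thesis by simp
  qed
  then show ?thesis using lw tl_lift[OF w] by (simp add: is_end_def)
qed

lemma main_loc:
  shows
    "is_cat_iso W1 W2 TO TA
   \<and> (has_end PP C Fo Fa RP LLo LLa \<longleftrightarrow> has_end B C Eo Ea R2 L2o L2a)
   \<and> (\<forall>c \<theta>. is_end B C Eo Ea R2 L2o L2a c \<theta> \<longrightarrow> is_end PP C Fo Fa RP LLo LLa c (tlf \<theta>))
   \<and> (\<forall>c \<eta>. is_end PP C Fo Fa RP LLo LLa c \<eta> \<longrightarrow>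
        (\<exists>\<theta>. is_end B C Eo Ea R2 L2o L2a c \<theta> \<and> (\<forall>p\<in>Obj R1 \<times> Obj R2. \<eta> p = tlf \<theta> p)))"
  using iso end_fwd end_bwd unfolding has_end_def by blast

end

theorem mainTheorem6:
  fixes A :: "('oa,'aa,'za) vcat_scheme" and B :: "('ob,'ab,'zb) vcat_scheme"
    and C :: "('oc,'ac,'zc) cat_scheme"
    and R1 :: "('r1,'b1,'z1) cat_scheme" and R2 :: "('r2,'b2,'z2) cat_scheme"
    and L1o :: "'r1 \<Rightarrow> 'oa" and L1a :: "'b1 \<Rightarrow> 'aa"
    and L2o :: "'r2 \<Rightarrow> 'ob" and L2a :: "'b2 \<Rightarrow> 'ab"
    and Fo :: "'oa \<times> 'ob \<Rightarrow> 'oc" and Fa :: "'aa \<times> 'ab \<Rightarrow> 'ac"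
    and Eo :: "'ob \<Rightarrow> 'oc" and \<omega> :: "'ob \<Rightarrow> 'r1 \<Rightarrow> 'ac"
    and Ea :: "'ab \<Rightarrow> 'ac"
  assumes A: "is_variance A" and B: "is_variance B" and C: "is_cat C"
    and R1: "is_cat R1" and R2: "is_cat R2"
    and L1: "is_functor R1 A L1o L1a" and L2: "is_functor R2 B L2o L2a"
    and F: "is_vfunctor (prod_vcat A B) C Fo Fa"
    and ends: "\<forall>b\<in>Obj B. is_end A C (\<lambda>x. Fo (x, b)) (\<lambda>f. Fa (f, Id B b)) R1 L1o L1a (Eo b) (\<omega> b)"
    and E: "is_vfunctor B C Eo Ea"
    and E_nat: "\<forall>x\<in>Obj R1. \<forall>g\<in>Arr B.
        Comp C (Fa (Id A (L1o x), g)) (\<omega> (vsrc B g) x) = Comp C (\<omega> (vtgt B g) x) (Ea g)"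
  shows
    "is_cat_iso (wedge_cat B C Eo Ea R2 L2o L2a)
        (wedge_cat (prod_vcat A B) C Fo Fa (prod_cat R1 R2)
           (\<lambda>(x,y). (L1o x, L2o y)) (\<lambda>(f,g). (L1a f, L2a g)))
        (tilde_obj C R1 R2 L2o \<omega>) (tilde_arr C R1 R2 L2o \<omega>)
   \<and> (has_end (prod_vcat A B) C Fo Fa (prod_cat R1 R2)
           (\<lambda>(x,y). (L1o x, L2o y)) (\<lambda>(f,g). (L1a f, L2a g))
       \<longleftrightarrow> has_end B C Eo Ea R2 L2o L2a)
   \<and> (\<forall>c \<theta>. is_end B C Eo Ea R2 L2o L2a c \<theta> \<longrightarrow>
        is_end (prod_vcat A B) C Fo Fa (prod_cat R1 R2)
           (\<lambda>(x,y). (L1o x, L2o y)) (\<lambda>(f,g). (L1a f, L2a g)) c (tilde_fam C R1 R2 L2o \<omega> \<theta>))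
   \<and> (\<forall>c \<eta>. is_end (prod_vcat A B) C Fo Fa (prod_cat R1 R2)
           (\<lambda>(x,y). (L1o x, L2o y)) (\<lambda>(f,g). (L1a f, L2a g)) c \<eta> \<longrightarrow>
        (\<exists>\<theta>. is_end B C Eo Ea R2 L2o L2a c \<theta> \<and>
              (\<forall>p\<in>Obj R1 \<times> Obj R2. \<eta> p = tilde_fam C R1 R2 L2o \<omega> \<theta> p)))"
proof -
  interpret ctx A B C R1 R2 L1o L1a L2o L2a Fo Fa Eo \<omega> Ea
    using assms unfolding ctx_def by (intro conjI) assumption+
  show ?thesis by (rule main_loc)
qed

end
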